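(* Let $\psi_j$ be a decomposable factorization curve of a (real or complex) factorization structure $\varphi:\mathfrak{h}\to V^*$, and let $1\le r\le\deg\psi_j+1$. Then for any $r$ pairwise distinct points $\ell_1,\ldots,\ell_r\in\mathbb{P}(V_j)$, the lines $\psi_j(\ell_1),\ldots,\psi_j(\ell_r)\subset\mathfrak{h}$ are linearly independent.
   Context: $V_1,\ldots,V_m$ are 2-dimensional vector spaces over $\mathbb{F}=\mathbb{R}$ or $\mathbb{C}$, $V^*=V_1^*\otimes\cdots\otimes V_m^*$, $\Sigma^0_{j,\ell}=V_1^*\otimes\cdots\otimes\ell^0\otimes\cdots\otimes V_m^*$ ($\ell^0$ the annihilator of $\ell$, in slot $j$). A factorization structure of dimension $m$ is an injective linear map $\varphi:\mathfrak{h}\to V^*$, $\dim\mathfrak{h}=m+1$, with $\dim(\varphi(\mathfrak{h})\cap\Sigma^0_{j,\ell})=1$ for all $j$ and all $\ell$ in a nonempty Zariski-open subset of $\mathbb{P}(V_j)$. The $j$-th factorization curve $\psi_j:\mathbb{P}(V_j)\to\mathbb{P}(\mathfrak{h})$ is the unique regular extension of the generically defined regular map $\ell\mapsto\varphi^{-1}(\varphi(\mathfrak{h})\cap\Sigma^0_{j,\ell})$; $\deg\psi_j$ is the integer $e$ with $\psi_j^*\mathcal{O}_{\mathfrak{h}}(1)\cong\mathcal{O}_{V_j}(e)$. Curves with the same image are equivalent; $\psi_j$ is decomposable if its equivalence class in $\{\psi_1,\ldots,\psi_m\}$ has exactly $\deg\psi_j$ elements. *)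

theory Defs
  imports Main "HOL-Computational_Algebra.Polynomial"
begin

text \<open>Coordinates: V_j = F^2 with basis e_False, e_True; a point of P(V_j) is the class
  of a nonzero vector. V^* = V_1^* \<otimes> ... \<otimes> V_m^* is represented by functions on
  bool lists of length m (value at xs = T(e_{xs!0},...,e_{xs!(m-1)})), zero elsewhere.
  h = F^(m+1) is represented by functions nat \<Rightarrow> F vanishing above m.\<close>

definition proj_pt :: "'a::field \<times> 'a \<Rightarrow> ('a \<times> 'a) set" where
  "proj_pt a = {(c * fst a, c * snd a) | c. c \<noteq> 0}"

definition P1 :: "('a::field \<times> 'a) set set" where
  "P1 = {proj_pt a | a. a \<noteq> (0, 0)}"

definition zariski_open_P1 :: "('a::field \<times> 'a) set set \<Rightarrow> bool" where
  "zariski_open_P1 U \<longleftrightarrow> U \<subseteq> P1 \<and> (U = {} \<or> finite (P1 - U))"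

definition hspace :: "nat \<Rightarrow> (nat \<Rightarrow> 'a::field) set" where
  "hspace m = {v. \<forall>i>m. v i = 0}"

definition tensor_space :: "nat \<Rightarrow> (bool list \<Rightarrow> 'a::field) set" where
  "tensor_space m = {T. \<forall>xs. length xs \<noteq> m \<longrightarrow> T xs = 0}"

definition fs_map :: "nat \<Rightarrow> (nat \<Rightarrow> bool list \<Rightarrow> 'a::field) \<Rightarrow> (nat \<Rightarrow> 'a) \<Rightarrow> (bool list \<Rightarrow> 'a)" where
  "fs_map m B v = (\<lambda>xs. if length xs = m then (\<Sum>i\<le>m. v i * B i xs) else 0)"

text \<open>Sigma^0_{j,l} = kernel of contraction of slot j with l = [a] (j 0-indexed, j < m).\<close>
definition Sigma0 :: "nat \<Rightarrow> nat \<Rightarrow> 'a::field \<times> 'a \<Rightarrow> (bool list \<Rightarrow> 'a) set" where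
  "Sigma0 m j a = {T \<in> tensor_space m. \<forall>xs. length xs = m \<longrightarrow>
      fst a * T (xs[j := False]) + snd a * T (xs[j := True]) = 0}"

definition line_span :: "('b \<Rightarrow> 'a::field) \<Rightarrow> ('b \<Rightarrow> 'a) set" where
  "line_span v = {(\<lambda>i. c * v i) | c. True}"

definition one_dim :: "('b \<Rightarrow> 'a::field) set \<Rightarrow> bool" where
  "one_dim S \<longleftrightarrow> (\<exists>v. (\<exists>i. v i \<noteq> 0) \<and> S = line_span v)"

definition factorization_structure :: "nat \<Rightarrow> (nat \<Rightarrow> bool list \<Rightarrow> 'a::field) \<Rightarrow> bool" where
  "factorization_structure m B \<longleftrightarrow>
     inj_on (fs_map m B) (hspace m) \<and>
     (\<forall>j<m. \<exists>U. zariski_open_P1 U \<and> U \<noteq> {} \<and>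
        (\<forall>a. a \<noteq> (0, 0) \<and> proj_pt a \<in> U \<longrightarrow>
           one_dim (fs_map m B ` hspace m \<inter> Sigma0 m j a)))"

text \<open>Regular maps P^1 \<rightarrow> P(h) of degree e: given by m+1 binary forms
  f_i(x,y) = sum_{k\<le>e} coeff (p i) k x^k y^(e-k) of degree e without common factor
  (equivalently without common zero over the algebraic closure).\<close>
definition hom_eval :: "nat \<Rightarrow> nat \<Rightarrow> (nat \<Rightarrow> 'a::field poly) \<Rightarrow> 'a \<times> 'a \<Rightarrow> (nat \<Rightarrow> 'a)" where
  "hom_eval m e p a = (\<lambda>i. if i \<le> m then (\<Sum>k\<le>e. coeff (p i) k * fst a ^ k * snd a ^ (e - k)) else 0)"

definition regular_rep :: "nat \<Rightarrow> nat \<Rightarrow> (nat \<Rightarrow> 'a::field poly) \<Rightarrow> bool" where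
  "regular_rep m e p \<longleftrightarrow>
     (\<forall>i\<le>m. degree (p i) \<le> e) \<and>
     (\<exists>i\<le>m. coeff (p i) e \<noteq> 0) \<and>
     (\<forall>q. (\<forall>i\<le>m. q dvd p i) \<longrightarrow> degree q = 0)"

text \<open>psi_j given by (e,p) is the j-th factorization curve: a regular map of degree e that
  agrees with l \<mapsto> phi^{-1}(phi(h) \<inter> Sigma^0_{j,l}) on a nonempty Zariski-open set.\<close>
definition factorization_curve ::
  "nat \<Rightarrow> (nat \<Rightarrow> bool list \<Rightarrow> 'a::field) \<Rightarrow> nat \<Rightarrow> nat \<Rightarrow> (nat \<Rightarrow> 'a poly) \<Rightarrow> bool" where
  "factorization_curve m B j e p \<longleftrightarrow> regular_rep m e p \<and>
     (\<exists>U. zariski_open_P1 U \<and> U \<noteq> {} \<and>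
        (\<forall>a. a \<noteq> (0, 0) \<and> proj_pt a \<in> U \<longrightarrow>
           line_span (hom_eval m e p a) = {v \<in> hspace m. fs_map m B v \<in> Sigma0 m j a}))"

definition curve_image :: "nat \<Rightarrow> nat \<Rightarrow> (nat \<Rightarrow> 'a::field poly) \<Rightarrow> (nat \<Rightarrow> 'a) set set" where
  "curve_image m e p = {line_span (hom_eval m e p a) | a. a \<noteq> (0, 0)}"

definition decomposable :: "nat \<Rightarrow> (nat \<Rightarrow> nat) \<Rightarrow> (nat \<Rightarrow> nat \<Rightarrow> 'a::field poly) \<Rightarrow> nat \<Rightarrow> bool" where
  "decomposable m e p j \<longleftrightarrow>
     card {k. k < m \<and> curve_image m (e k) (p k) = curve_image m (e j) (p j)} = e j"

definition lin_indep_family :: "nat \<Rightarrow> (nat \<Rightarrow> 'b \<Rightarrow> 'a::field) \<Rightarrow> bool" where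
  "lin_indep_family r w \<longleftrightarrow>
     (\<forall>c. (\<forall>t. (\<Sum>i<r. c i * w i t) = 0) \<longrightarrow> (\<forall>i<r. c i = 0))"

end

theory Submission
  imports Defs Complex_Main
begin


definition contr :: "nat \<Rightarrow> 'a::field \<times> 'a \<Rightarrow> (bool list \<Rightarrow> 'a) \<Rightarrow> (bool list \<Rightarrow> 'a)" where
  "contr k b T = (\<lambda>xs. fst b * T (xs[k:=False]) + snd b * T (xs[k:=True]))"

definition ann :: "nat \<Rightarrow> nat \<Rightarrow> 'a::field \<times> 'a \<Rightarrow> (bool list \<Rightarrow> 'a) \<Rightarrow> bool" where
  "ann m k d T \<longleftrightarrow> (\<forall>xs. length xs = m \<longrightarrow> contr k d T xs = 0)"

definition zerom :: "nat \<Rightarrow> (bool list \<Rightarrow> 'a::field) \<Rightarrow> bool" where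
  "zerom m T \<longleftrightarrow> (\<forall>xs. length xs = m \<longrightarrow> T xs = 0)"

definition nzm :: "nat \<Rightarrow> (bool list \<Rightarrow> 'a::field) \<Rightarrow> bool" where
  "nzm m T \<longleftrightarrow> (\<exists>xs. length xs = m \<and> T xs \<noteq> 0)"

definition det2 :: "'a::field \<times> 'a \<Rightarrow> 'a \<times> 'a \<Rightarrow> 'a" where
  "det2 a b = fst a * snd b - snd a * fst b"

definition comp :: "(nat \<times> ('a::field \<times> 'a)) list \<Rightarrow> (bool list \<Rightarrow> 'a) \<Rightarrow> (bool list \<Rightarrow> 'a)" where
  "comp L T = foldr (\<lambda>kb. contr (fst kb) (snd kb)) L T"

lemma comp_Nil[simp]: "comp [] T = T" by (simp add: comp_def)
lemma comp_Cons[simp]: "comp (kb # L) T = contr (fst kb) (snd kb) (comp L T)" by (simp add: comp_def)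

lemma contr_lin: "contr k b (\<lambda>xs. \<Sum>i\<in>I. c i * F i xs) = (\<lambda>xs. \<Sum>i\<in>I. c i * contr k b (F i) xs)"
  by (simp add: contr_def sum_distrib_left sum.distrib algebra_simps)

lemma comp_lin: "comp L (\<lambda>xs. \<Sum>i\<in>I. c i * F i xs) = (\<lambda>xs. \<Sum>i\<in>I. c i * comp L (F i) xs)"
  by (induction L) (simp_all add: contr_lin)

lemma zerom_contr: "zerom m T \<Longrightarrow> zerom m (contr k b T)"
  by (simp add: zerom_def contr_def)

lemma zerom_comp: "zerom m T \<Longrightarrow> zerom m (comp L T)"
  by (induction L) (simp_all add: zerom_contr)

lemma ann_preserve:
  assumes "ann m k d T" "k \<noteq> k'"
  shows "ann m k d (contr k' b T)"
  unfolding ann_def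
proof (intro allI impI)
  fix xs :: "bool list" assume l: "length xs = m"
  have s: "xs[k:=x, k':=y] = xs[k':=y, k:=x]" for x y using assms(2) by (rule list_update_swap)
  have a1: "contr k d T (xs[k':=False]) = 0" "contr k d T (xs[k':=True]) = 0"
    using assms(1) l by (auto simp: ann_def)
  have "contr k d (contr k' b T) xs = fst b * contr k d T (xs[k':=False]) + snd b * contr k d T (xs[k':=True])"
    by (simp add: contr_def s algebra_simps)
  then show "contr k d (contr k' b T) xs = 0" using a1 by simp
qed

lemma comp_preserve:
  "ann m k d T \<Longrightarrow> k \<notin> fst ` set L \<Longrightarrow> ann m k d (comp L T)"
  by (induction L) (auto intro: ann_preserve)

lemma comp_kill:
  "distinct (map fst L) \<Longrightarrow> (k, b) \<in> set L \<Longrightarrow> ann m k b T \<Longrightarrow> zerom m (comp L T)"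
proof (induction L)
  case Nil then show ?case by simp
next
  case (Cons kb L)
  show ?case
  proof (cases "(k,b) \<in> set L")
    case True then show ?thesis using Cons by (auto intro: zerom_contr)
  next
    case False
    then have kb: "kb = (k,b)" using Cons.prems by auto
    then have "k \<notin> fst ` set L" using Cons.prems by auto
    then have "ann m k b (comp L T)" using Cons.prems comp_preserve by blast
    then show ?thesis using kb by (simp add: ann_def zerom_def)
  qed
qed

lemma nz_contr:
  assumes "ann m k d T" "det2 d b \<noteq> 0" "nzm m T" "k < m"
  shows "nzm m (contr k b T)"
proof -
  obtain xs where l: "length xs = m" and t: "T xs \<noteq> 0" using assms(3) by (auto simp: nzm_def)
  define u where "u = T (xs[k:=False])"
  define v where "v = T (xs[k:=True])"
  have uv: "u \<noteq> 0 \<or> v \<noteq> 0"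
  proof (cases "xs ! k")
    case True then have "xs[k:=True] = xs" by (metis list_update_id)
    then show ?thesis using t v_def by simp
  next
    case False then have "xs[k:=False] = xs" by (metis (full_types) list_update_id)
    then show ?thesis using t u_def by simp
  qed
  have d: "fst d * u + snd d * v = 0" using assms(1) l by (simp add: ann_def contr_def u_def v_def)
  show ?thesis
  proof (rule ccontr)
    assume "\<not> ?thesis"
    then have b: "fst b * u + snd b * v = 0" using l by (simp add: nzm_def contr_def u_def v_def)
    have "det2 d b * u = snd b * (fst d * u + snd d * v) - snd d * (fst b * u + snd b * v)"
      by (simp add: det2_def algebra_simps)
    then have "det2 d b * u = 0" using d b by simp
    moreover have "det2 d b * v = fst d * (fst b * u + snd b * v) - fst b * (fst d * u + snd d * v)"
      by (simp add: det2_def algebra_simps)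
    then have "det2 d b * v = 0" using d b by simp
    ultimately show False using uv assms(2) by simp
  qed
qed

lemma comp_nz:
  "distinct (map fst L) \<Longrightarrow> (\<forall>kb\<in>set L. fst kb < m \<and> (\<exists>d. ann m (fst kb) d T \<and> det2 d (snd kb) \<noteq> 0))
   \<Longrightarrow> nzm m T \<Longrightarrow> nzm m (comp L T)"
proof (induction L)
  case Nil then show ?case by simp
next
  case (Cons kb L)
  then have ih: "nzm m (comp L T)" by simp
  obtain d where d: "ann m (fst kb) d T" "det2 d (snd kb) \<noteq> 0" "fst kb < m" using Cons.prems by auto
  have "fst kb \<notin> fst ` set L" using Cons.prems by auto
  then have "ann m (fst kb) d (comp L T)" using d comp_preserve by blast
  then show ?case using nz_contr[OF _ d(2) ih d(3)] by simp
qed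

lemma two_ann_zero:
  assumes "ann m k a T" "ann m k a' T" "det2 a a' \<noteq> 0" "k < m"
  shows "zerom m T"
proof (rule ccontr)
  assume "\<not> zerom m T"
  then have "nzm m T" by (auto simp: zerom_def nzm_def)
  then have "nzm m (contr k a' T)" using nz_contr assms by blast
  then show False using assms(2) by (auto simp: nzm_def ann_def)
qed



definition form :: "nat \<Rightarrow> (nat \<Rightarrow> 'a::field) \<Rightarrow> 'a \<times> 'a \<Rightarrow> 'a" where
  "form n g b = (\<Sum>s\<le>n. g s * fst b ^ s * snd b ^ (n - s))"

lemma form_hom: "form n g (c * x, c * y) = c ^ n * form n g (x, y)"
proof -
  have h: "g s * (c * x) ^ s * (c * y) ^ (n - s) = c ^ n * (g s * x ^ s * y ^ (n - s))" if "s \<le> n" for s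
  proof -
    have "c ^ s * c ^ (n - s) = c ^ n" using that by (simp add: power_add[symmetric])
    then show ?thesis by (simp add: power_mult_distrib algebra_simps)
  qed
  show ?thesis unfolding form_def sum_distrib_left fst_conv snd_conv
    by (intro sum.cong refl) (simp add: h)
qed

lemma form_poly: "form n g (t, 1) = poly (\<Sum>s\<le>n. monom (g s) s) t"
  by (simp add: form_def poly_sum poly_monom)

lemma form_x0: "form n g (x, 0) = g n * x ^ n"
proof -
  have "form n g (x, 0) = (\<Sum>s\<in>{n}. g s * x ^ s * 0 ^ (n - s))"
    unfolding form_def fst_conv snd_conv by (rule sum.mono_neutral_right) auto
  then show ?thesis by simp
qed

lemma hom_eval_form: "i \<le> m \<Longrightarrow> hom_eval m e p a i = form e (\<lambda>s. coeff (p i) s) a"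
  by (simp add: hom_eval_def form_def)

lemma fs_map_hom: "length ys = m \<Longrightarrow>
   fs_map m B (hom_eval m e p b) ys = form e (\<lambda>s. \<Sum>i\<le>m. coeff (p i) s * B i ys) b"
  by (simp add: fs_map_def hom_eval_form form_def sum_distrib_left sum_distrib_right
      algebra_simps sum.swap[where A="{..m}"])

lemma nonvanish:
  assumes r: "regular_rep m e p" and a: "a \<noteq> (0, 0)"
  shows "\<exists>i\<le>m. hom_eval m e p a i \<noteq> 0"
proof (rule ccontr)
  assume "\<not> ?thesis"
  then have z: "\<And>i. i \<le> m \<Longrightarrow> form e (\<lambda>s. coeff (p i) s) a = 0" by (simp add: hom_eval_form)
  obtain x y where xy: "a = (x, y)" by force
  show False
  proof (cases "y = 0")
    case True
    then have x: "x \<noteq> 0" using a xy by simp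
    obtain i where "i \<le> m" "coeff (p i) e \<noteq> 0" using r by (auto simp: regular_rep_def)
    then show False using z[of i] xy True x by (simp add: form_x0)
  next
    case False
    define t where "t = x / y"
    have aeq: "a = (y * t, y * 1)" using xy False by (simp add: t_def)
    have "form e (\<lambda>s. coeff (p i) s) a = y ^ e * poly (p i) t" if "i \<le> m" for i
    proof -
      have "form e (\<lambda>s. coeff (p i) s) a = y ^ e * form e (\<lambda>s. coeff (p i) s) (t, 1)"
        unfolding aeq by (rule form_hom)
      then show ?thesis using that r
        by (simp add: form_poly poly_as_sum_of_monoms' regular_rep_def)
    qed
    then have "poly (p i) t = 0" if "i \<le> m" for i using z that False by simp
    then have "[:- t, 1:] dvd p i" if "i \<le> m" for i using that by (simp add: poly_eq_0_iff_dvd)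
    then have "\<forall>i\<le>m. [:- t, 1:] dvd p i" by blast
    then have "degree [:- t, 1:] = 0" using r unfolding regular_rep_def by blast
    then show False by simp
  qed
qed

lemma coeff_sum_monom': "coeff (\<Sum>s\<le>n. monom (g s) s) q = (if q \<le> n then g q else 0)"
  by (simp add: coeff_sum coeff_monom)

lemma proj_pt_t1_inj: "inj (\<lambda>t::'a::field. proj_pt (t, 1))"
proof (rule injI)
  fix t t' :: 'a assume "proj_pt (t, 1) = proj_pt (t', 1)"
  then have "(t', 1) \<in> proj_pt (t, 1)"
    by (metis (mono_tags, lifting) mem_Collect_eq mult_1 one_neq_zero proj_pt_def fst_conv snd_conv)
  then show "t = t'" by (auto simp: proj_pt_def)
qed

lemma factA:
  fixes B :: "nat \<Rightarrow> bool list \<Rightarrow> 'a::field_char_0"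
  assumes fc: "factorization_curve m B k e p" and b: "b \<noteq> (0, 0)"
  shows "ann m k b (fs_map m B (hom_eval m e p b))"
  unfolding ann_def
proof (intro allI impI)
  fix xs :: "bool list" assume l: "length xs = m"
  obtain U where U: "zariski_open_P1 U" "U \<noteq> {}"
    "\<And>a. a \<noteq> (0, 0) \<and> proj_pt a \<in> U \<Longrightarrow>
        line_span (hom_eval m e p a) = {v \<in> hspace m. fs_map m B v \<in> Sigma0 m k a}"
    using fc by (auto simp: factorization_curve_def)
  define aF where "aF = (\<lambda>s. \<Sum>i\<le>m. coeff (p i) s * B i (xs[k:=False]))"
  define aT where "aT = (\<lambda>s. \<Sum>i\<le>m. coeff (p i) s * B i (xs[k:=True]))"
  define G where "G = (\<lambda>b. fst b * form e aF b + snd b * form e aT b)"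
  have Geq: "contr k b' (fs_map m B (hom_eval m e p b')) xs = G b'" for b'
    using l by (simp add: contr_def G_def fs_map_hom aF_def aT_def)
  have G0: "G a = 0" if "a \<noteq> (0,0)" "proj_pt a \<in> U" for a
  proof -
    have "hom_eval m e p a \<in> line_span (hom_eval m e p a)"
      unfolding line_span_def by (rule CollectI, rule exI[of _ 1]) simp
    then have "fs_map m B (hom_eval m e p a) \<in> Sigma0 m k a" using U(3) that by blast
    then have "contr k a (fs_map m B (hom_eval m e p a)) xs = 0"
      using l by (simp add: Sigma0_def contr_def)
    then show ?thesis using Geq by simp
  qed
  define AF where "AF = (\<Sum>s\<le>e. monom (aF s) s)"
  define AT where "AT = (\<Sum>s\<le>e. monom (aT s) s)"
  define Pg where "Pg = pCons 0 AF + AT"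
  have g: "G (t, 1) = poly Pg t" for t
    by (simp add: G_def Pg_def AF_def AT_def form_poly)
  have fin: "finite {t. proj_pt (t, 1::'a) \<notin> U}"
  proof -
    have "proj_pt (t,1::'a) \<in> P1" for t
      unfolding P1_def by (rule CollectI, rule exI[of _ "(t,1)"]) simp
    then have "(\<lambda>t. proj_pt (t, 1::'a)) ` {t. proj_pt (t, 1) \<notin> U} \<subseteq> P1 - U"
      by blast
    moreover have "finite (P1 - U)" using U(1,2) by (simp add: zariski_open_P1_def)
    ultimately have "finite ((\<lambda>t. proj_pt (t, 1::'a)) ` {t. proj_pt (t, 1) \<notin> U})"
      using finite_subset by blast
    then show ?thesis by (rule finite_imageD[OF _ inj_on_subset[OF proj_pt_t1_inj subset_UNIV]])
  qed
  have "infinite {t. proj_pt (t, 1::'a) \<in> U}"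
  proof
    assume "finite {t. proj_pt (t, 1::'a) \<in> U}"
    with fin have "finite ({t. proj_pt (t, 1::'a) \<in> U} \<union> {t. proj_pt (t, 1) \<notin> U})" by simp
    moreover have "{t. proj_pt (t, 1::'a) \<in> U} \<union> {t. proj_pt (t, 1) \<notin> U} = UNIV" by auto
    ultimately show False using infinite_UNIV_char_0[where 'a='a] by metis
  qed
  moreover have "{t. proj_pt (t, 1::'a) \<in> U} \<subseteq> {t. poly Pg t = 0}"
  proof
    fix t assume "t \<in> {t. proj_pt (t, 1::'a) \<in> U}"
    then have "G (t, 1) = 0" using G0[of "(t, 1)"] by simp
    then show "t \<in> {t. poly Pg t = 0}" using g by simp
  qed
  ultimately have "infinite {t. poly Pg t = 0}" using finite_subset by blast
  then have Pg0: "Pg = 0" using poly_roots_finite by blast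
  have "G b = 0"
  proof -
    obtain x y where xy: "b = (x, y)" by force
    show ?thesis
    proof (cases "y = 0")
      case True
      have "coeff Pg (Suc e) = aF e" by (simp add: Pg_def AF_def AT_def coeff_sum_monom')
      then have "aF e = 0" using Pg0 by simp
      then show ?thesis using True xy by (simp add: G_def form_x0)
    next
      case False
      define t where "t = x / y"
      have bb: "b = (y * t, y * 1)" using xy False by (simp add: t_def)
      have "G b = y * t * (y ^ e * form e aF (t, 1)) + y * (y ^ e * form e aT (t,1))"
        unfolding G_def bb fst_conv snd_conv form_hom by simp
      also have "\<dots> = y ^ Suc e * G (t, 1)" by (simp add: G_def algebra_simps)
      finally show ?thesis using g Pg0 by simp
    qed
  qed
  then show "contr k b (fs_map m B (hom_eval m e p b)) xs = 0" using Geq by simp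
qed



lemma scale_proj:
  assumes "c \<noteq> 0" shows "proj_pt (c * fst a, c * snd a) = proj_pt (a :: 'a::field \<times> 'a)"
proof -
  have "proj_pt (c * fst a, c * snd a) \<subseteq> proj_pt a"
  proof
    fix z assume "z \<in> proj_pt (c * fst a, c * snd a)"
    then obtain d where "d \<noteq> 0" "z = (d * (c * fst a), d * (c * snd a))" by (auto simp: proj_pt_def)
    then show "z \<in> proj_pt a" using assms
      unfolding proj_pt_def by (auto intro!: exI[of _ "d * c"])
  qed
  moreover have "proj_pt a \<subseteq> proj_pt (c * fst a, c * snd a)"
  proof
    fix z assume "z \<in> proj_pt a"
    then obtain d where "d \<noteq> 0" "z = (d * fst a, d * snd a)" by (auto simp: proj_pt_def)
    then show "z \<in> proj_pt (c * fst a, c * snd a)" using assms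
      unfolding proj_pt_def by (auto intro!: exI[of _ "d / c"])
  qed
  ultimately show ?thesis by blast
qed

lemma det0:
  fixes a b :: "'a::field \<times> 'a"
  assumes "a \<noteq> (0,0)" "b \<noteq> (0,0)" "det2 a b = 0"
  shows "\<exists>c. c \<noteq> 0 \<and> b = (c * fst a, c * snd a)"
proof (cases "fst a = 0")
  case False
  define c where "c = fst b / fst a"
  have e: "fst a * snd b = snd a * fst b" using assms(3) by (simp add: det2_def)
  have "snd b = c * snd a" using e False by (simp add: c_def field_simps)
  moreover have "fst b = c * fst a" using False by (simp add: c_def)
  moreover have "c \<noteq> 0"
  proof
    assume "c = 0"
    then have "fst b = 0" "snd b = 0" using calculation by auto
    then show False using assms(2) by (simp add: prod_eq_iff)
  qed
  ultimately show ?thesis by (metis prod.collapse)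
next
  case True
  then have s: "snd a \<noteq> 0" using assms(1) by (simp add: prod_eq_iff)
  then have f: "fst b = 0" using assms(3) True by (simp add: det2_def)
  define c where "c = snd b / snd a"
  have "snd b \<noteq> 0" using f assms(2) by (simp add: prod_eq_iff)
  then have "c \<noteq> 0" using s by (simp add: c_def)
  moreover have "b = (c * fst a, c * snd a)" using s f True by (simp add: c_def prod_eq_iff)
  ultimately show ?thesis by blast
qed

lemma det_ne:
  fixes a b :: "'a::field \<times> 'a"
  assumes "a \<noteq> (0,0)" "b \<noteq> (0,0)" "proj_pt a \<noteq> proj_pt b"
  shows "det2 a b \<noteq> 0"
  using det0[OF assms(1,2)] scale_proj assms(3) by metis

lemma hom_eval_scale: "hom_eval m e p (c * x, c * y) = (\<lambda>i. c ^ e * hom_eval m e p (x, y) i)"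
proof (rule ext)
  fix i show "hom_eval m e p (c * x, c * y) i = c ^ e * hom_eval m e p (x, y) i"
  proof (cases "i \<le> m")
    case True then show ?thesis by (simp add: hom_eval_form form_hom)
  next
    case False then show ?thesis by (simp add: hom_eval_def)
  qed
qed

lemma fs_map_scale: "fs_map m B (\<lambda>t. c * v t) = (\<lambda>xs. c * fs_map m B v xs)"
  by (rule ext) (simp add: fs_map_def sum_distrib_left algebra_simps)

lemma fs_map_sum: "fs_map m B (\<lambda>t. \<Sum>i<r. c i * w i t) = (\<lambda>xs. \<Sum>i<r. c i * fs_map m B (w i) xs)"
  by (rule ext) (simp add: fs_map_def sum_distrib_left sum_distrib_right algebra_simps sum.swap[where A="{..m}"])

lemma ann_scale: "ann m k d T \<Longrightarrow> ann m k d (\<lambda>xs. c * T xs)"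
  by (simp add: ann_def contr_def) (metis distrib_left mult.left_commute mult_zero_right)

lemma hom_in_h: "hom_eval m e p a \<in> hspace m"
  by (simp add: hspace_def hom_eval_def)

lemma nz_fs:
  assumes "inj_on (fs_map m B) (hspace m)" "v \<in> hspace m" "\<exists>i. v i \<noteq> 0"
  shows "nzm m (fs_map m B v)"
proof (rule ccontr)
  assume "\<not> ?thesis"
  then have "fs_map m B v = fs_map m B (\<lambda>_. 0)"
    by (auto simp: nzm_def fs_map_def)
  moreover have "(\<lambda>_. 0) \<in> hspace m" by (simp add: hspace_def)
  ultimately have "v = (\<lambda>_. 0)" using inj_onD[OF assms(1)] assms(2) by blast
  then show False using assms(3) by simp
qed

lemma in_ls: "v \<in> line_span w \<longleftrightarrow> (\<exists>c. v = (\<lambda>i. c * w i))"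
  by (auto simp: line_span_def)

lemma self_ls: "v \<in> line_span v"
  unfolding in_ls by (rule exI[of _ 1]) simp



lemma main:
  fixes B :: "nat \<Rightarrow> bool list \<Rightarrow> 'a::field_char_0" and p :: "nat \<Rightarrow> nat \<Rightarrow> 'a poly"
    and a :: "nat \<Rightarrow> 'a \<times> 'a" and e :: "nat \<Rightarrow> nat"
  assumes fs: "factorization_structure m B"
    and fc: "\<forall>k<m. factorization_curve m B k (e k) (p k)"
    and j: "j < m" and dec: "decomposable m e p j" and rle: "r \<le> e j + 1"
    and anz: "\<forall>i<r. a i \<noteq> (0, 0)" and ainj: "inj_on (\<lambda>i. proj_pt (a i)) {..<r}"
  shows "lin_indep_family r (\<lambda>i. hom_eval m (e j) (p j) (a i))"
  unfolding lin_indep_family_def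
proof (intro allI impI)
  fix c :: "nat \<Rightarrow> 'a" and i0
  assume sum0: "\<forall>t. (\<Sum>i<r. c i * hom_eval m (e j) (p j) (a i) t) = 0" and i0: "i0 < r"
  define w where "w = (\<lambda>i. hom_eval m (e j) (p j) (a i))"
  define F where "F = (\<lambda>i. fs_map m B (w i))"
  have inj: "inj_on (fs_map m B) (hspace m)" using fs by (simp add: factorization_structure_def)
  have regj: "regular_rep m (e j) (p j)" using fc j by (simp add: factorization_curve_def)
  have nzF: "nzm m (F i)" if "i < r" for i
    unfolding F_def w_def
    by (rule nz_fs[OF inj hom_in_h]) (use nonvanish[OF regj] anz that in blast)
  have annj: "ann m j (a i) (F i)" if "i < r" for i
    unfolding F_def w_def using factA fc j anz that by blast
  define K where "K = {k. k < m \<and> curve_image m (e k) (p k) = curve_image m (e j) (p j)}"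
  have finK: "finite K" by (simp add: K_def)
  have cardK: "card K = e j" using dec by (simp add: decomposable_def K_def)
  define I where "I = {i. i < r \<and> i \<noteq> i0}"
  have I_eq: "I = {..<r} - {i0}" by (auto simp: I_def)
  have cardI: "card I = r - 1" using i0 by (simp add: I_eq)
  have cle: "card I \<le> card K" using cardI cardK rle by linarith
  have finI: "finite I" by (simp add: I_def)
  obtain g where g: "g ` I \<subseteq> K" "inj_on g I"
    using card_le_inj[OF finI finK cle] by blast
  have ex_pt: "\<exists>b. b \<noteq> (0,0) \<and> line_span (w i) = line_span (hom_eval m (e k) (p k) b)"
    if "i < r" "k \<in> K" for i k
  proof -
    have "line_span (w i) \<in> curve_image m (e j) (p j)"
      unfolding curve_image_def w_def using anz that(1) by blast
    then have "line_span (w i) \<in> curve_image m (e k) (p k)" using that(2) by (simp add: K_def)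
    then show ?thesis unfolding curve_image_def by blast
  qed
  define bs where "bs = (\<lambda>i. SOME b. b \<noteq> (0,0) \<and> line_span (w i) = line_span (hom_eval m (e (g i)) (p (g i)) b))"
  define ds where "ds = (\<lambda>i. SOME b. b \<noteq> (0,0) \<and> line_span (w i0) = line_span (hom_eval m (e (g i)) (p (g i)) b))"
  have bs: "bs i \<noteq> (0,0) \<and> line_span (w i) = line_span (hom_eval m (e (g i)) (p (g i)) (bs i))"
    if "i \<in> I" for i
    unfolding bs_def by (rule someI_ex, rule ex_pt) (use that g in \<open>auto simp: I_def\<close>)
  have ds: "ds i \<noteq> (0,0) \<and> line_span (w i0) = line_span (hom_eval m (e (g i)) (p (g i)) (ds i))"
    if "i \<in> I" for i
    unfolding ds_def by (rule someI_ex, rule ex_pt) (use that g i0 in \<open>auto simp: I_def\<close>)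
  have gm: "g i < m" if "i \<in> I" for i using g that by (auto simp: K_def)
  have ann_of: "ann m (g i) b (fs_map m B v)"
    if "i \<in> I" "b \<noteq> (0,0)" "line_span v = line_span (hom_eval m (e (g i)) (p (g i)) b)" for i b v
  proof -
    have "v \<in> line_span (hom_eval m (e (g i)) (p (g i)) b)" using that(3) self_ls by metis
    then obtain \<mu> where mu: "v = (\<lambda>t. \<mu> * hom_eval m (e (g i)) (p (g i)) b t)" by (auto simp: in_ls)
    have "ann m (g i) b (fs_map m B (hom_eval m (e (g i)) (p (g i)) b))"
      using factA fc gm[OF that(1)] that(2) by blast
    then show ?thesis unfolding mu fs_map_scale by (rule ann_scale)
  qed
  have K1: "ann m (g i) (bs i) (F i)" if "i \<in> I" for i
    unfolding F_def using ann_of[OF that] bs[OF that] by blast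
  have K2: "ann m (g i) (ds i) (F i0)" if "i \<in> I" for i
    unfolding F_def using ann_of[OF that] ds[OF that] by blast
  have K3: "det2 (ds i) (bs i) \<noteq> 0" if iI: "i \<in> I" for i
  proof
    assume "det2 (ds i) (bs i) = 0"
    then obtain \<kappa> where ka: "\<kappa> \<noteq> 0" "bs i = (\<kappa> * fst (ds i), \<kappa> * snd (ds i))"
      using det0 bs[OF iI] ds[OF iI] by blast
    define h where "h = hom_eval m (e (g i)) (p (g i))"
    have hb: "h (bs i) = (\<lambda>t. \<kappa> ^ e (g i) * h (ds i) t)"
      unfolding h_def ka(2) hom_eval_scale by simp
    have "w i \<in> line_span (h (bs i))" using bs[OF iI] self_ls h_def by metis
    then obtain \<mu> where mu: "w i = (\<lambda>t. \<mu> * h (bs i) t)" by (auto simp: in_ls)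
    have "h (ds i) \<in> line_span (w i0)" using ds[OF iI] self_ls h_def by metis
    then obtain \<nu> where nu: "h (ds i) = (\<lambda>t. \<nu> * w i0 t)" by (auto simp: in_ls)
    have wi: "w i = (\<lambda>t. (\<mu> * \<kappa> ^ e (g i) * \<nu>) * w i0 t)"
      unfolding mu hb nu by (simp add: algebra_simps)
    have ir: "i < r" "i \<noteq> i0" using iI by (auto simp: I_def)
    have "ann m j (a i0) (F i)"
      unfolding F_def wi fs_map_scale using annj[OF i0] unfolding F_def by (rule ann_scale)
    moreover have "det2 (a i) (a i0) \<noteq> 0"
      using det_ne anz ir i0 ainj by (metis inj_on_def lessThan_iff)
    ultimately have "zerom m (F i)" using two_ann_zero annj[OF ir(1)] j by blast
    then show False using nzF[OF ir(1)] by (auto simp: zerom_def nzm_def)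
  qed
  define L where "L = map (\<lambda>i. (g i, bs i)) (filter (\<lambda>i. i \<noteq> i0) [0..<r])"
  have setf: "set (filter (\<lambda>i. i \<noteq> i0) [0..<r]) = I" by (auto simp: I_def)
  have dist: "distinct (map fst L)"
    unfolding L_def using g(2) setf by (simp add: comp_def[symmetric] distinct_map o_def)
  have memL: "(g i, bs i) \<in> set L" if "i \<in> I" for i
    unfolding L_def using that setf by auto
  have "fs_map m B (\<lambda>t. \<Sum>i<r. c i * w i t) = fs_map m B (\<lambda>_. 0)"
    using sum0 by (simp add: w_def)
  moreover have "fs_map m B (\<lambda>_. 0) = (\<lambda>_. 0)" by (simp add: fs_map_def fun_eq_iff)
  ultimately have "(\<lambda>xs. \<Sum>i<r. c i * F i xs) = (\<lambda>_. 0)" by (simp add: fs_map_sum F_def)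
  then have "zerom m (comp L (\<lambda>xs. \<Sum>i<r. c i * F i xs))"
    by (intro zerom_comp) (simp add: zerom_def)
  then have z: "zerom m (\<lambda>xs. \<Sum>i<r. c i * comp L (F i) xs)" by (simp add: comp_lin)
  have kill: "zerom m (comp L (F i))" if "i \<in> I" for i
    by (rule comp_kill[OF dist memL[OF that] K1[OF that]])
  have "nzm m (comp L (F i0))"
  proof (rule comp_nz[OF dist _ nzF[OF i0]])
    show "\<forall>kb\<in>set L. fst kb < m \<and> (\<exists>d. ann m (fst kb) d (F i0) \<and> det2 d (snd kb) \<noteq> 0)"
    proof
      fix kb assume "kb \<in> set L"
      then obtain i where i: "i \<in> I" "kb = (g i, bs i)" unfolding L_def using setf by auto
      show "fst kb < m \<and> (\<exists>d. ann m (fst kb) d (F i0) \<and> det2 d (snd kb) \<noteq> 0)"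
        using i(2) gm[OF i(1)] K2[OF i(1)] K3[OF i(1)] by (metis fst_conv snd_conv)
    qed
  qed
  then obtain xs where xs: "length xs = m" "comp L (F i0) xs \<noteq> 0" by (auto simp: nzm_def)
  have "(\<Sum>i<r. c i * comp L (F i) xs) = c i0 * comp L (F i0) xs + (\<Sum>i\<in>I. c i * comp L (F i) xs)"
    using i0 by (simp add: I_eq sum.remove)
  also have "(\<Sum>i\<in>I. c i * comp L (F i) xs) = 0"
    using kill xs(1) by (simp add: zerom_def)
  finally have "c i0 * comp L (F i0) xs = 0" using z xs(1) by (simp add: zerom_def)
  then show "c i0 = 0" using xs(2) by simp
qed


theorem corollary2p16:
  shows "(\<forall>m (B :: nat \<Rightarrow> bool list \<Rightarrow> real) (e :: nat \<Rightarrow> nat) (p :: nat \<Rightarrow> nat \<Rightarrow> real poly)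
            j r (a :: nat \<Rightarrow> real \<times> real).
           factorization_structure m B \<and>
           (\<forall>k<m. factorization_curve m B k (e k) (p k)) \<and>
           j < m \<and> decomposable m e p j \<and>
           1 \<le> r \<and> r \<le> e j + 1 \<and>
           (\<forall>i<r. a i \<noteq> (0, 0)) \<and> inj_on (\<lambda>i. proj_pt (a i)) {..<r}
           \<longrightarrow> lin_indep_family r (\<lambda>i. hom_eval m (e j) (p j) (a i)))
       \<and>
         (\<forall>m (B :: nat \<Rightarrow> bool list \<Rightarrow> complex) (e :: nat \<Rightarrow> nat) (p :: nat \<Rightarrow> nat \<Rightarrow> complex poly)
            j r (a :: nat \<Rightarrow> complex \<times> complex).
           factorization_structure m B \<and>
           (\<forall>k<m. factorization_curve m B k (e k) (p k)) \<and>
           j < m \<and> decomposable m e p j \<and>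
           1 \<le> r \<and> r \<le> e j + 1 \<and>
           (\<forall>i<r. a i \<noteq> (0, 0)) \<and> inj_on (\<lambda>i. proj_pt (a i)) {..<r}
           \<longrightarrow> lin_indep_family r (\<lambda>i. hom_eval m (e j) (p j) (a i)))"
  proof (intro conjI allI impI)
  fix m and B :: "nat \<Rightarrow> bool list \<Rightarrow> real" and e :: "nat \<Rightarrow> nat" and p :: "nat \<Rightarrow> nat \<Rightarrow> real poly" and j r and a :: "nat \<Rightarrow> real \<times> real"
  assume h: "factorization_structure m B \<and> (\<forall>k<m. factorization_curve m B k (e k) (p k)) \<and> j < m \<and> decomposable m e p j \<and> 1 \<le> r \<and> r \<le> e j + 1 \<and> (\<forall>i<r. a i \<noteq> (0, 0)) \<and> inj_on (\<lambda>i. proj_pt (a i)) {..<r}"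
  then show "lin_indep_family r (\<lambda>i. hom_eval m (e j) (p j) (a i))" using main by blast
next
  fix m and B :: "nat \<Rightarrow> bool list \<Rightarrow> complex" and e :: "nat \<Rightarrow> nat" and p :: "nat \<Rightarrow> nat \<Rightarrow> complex poly" and j r and a :: "nat \<Rightarrow> complex \<times> complex"
  assume h: "factorization_structure m B \<and> (\<forall>k<m. factorization_curve m B k (e k) (p k)) \<and> j < m \<and> decomposable m e p j \<and> 1 \<le> r \<and> r \<le> e j + 1 \<and> (\<forall>i<r. a i \<noteq> (0, 0)) \<and> inj_on (\<lambda>i. proj_pt (a i)) {..<r}"
  then show "lin_indep_family r (\<lambda>i. hom_eval m (e j) (p j) (a i))" using main by blast
qed

end
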